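(* Let $T:X\rightrightarrows X^*$ be a pseudomonotone operator. If $\widehat{T}=T^\rho_D$, then $T$ is $D$-maximal pseudomonotone. Moreover, if $\mathrm{dom}(T)$ is convex, the converse holds: if $T$ is $D$-maximal pseudomonotone then $\widehat T=T^\rho_D$.
   Context: $X$ is a real Banach space with dual $X^*$ and pairing $\langle x,x^*\rangle=x^*(x)$. A multivalued operator $T:X\rightrightarrows X^*$ is identified with its graph $T\subset X\times X^*$; $T(x)=\{x^*:(x,x^* )\in T\}$, $\mathrm{dom}(T)=\{x:T(x)\ne\emptyset\}$, $Z_T=\{x:0\in T(x)\}$. For $A\subset X^*$, $\operatorname{cone}(A)=\{tv:t\ge0,v\in A\}$ and $\operatorname{cone}_\circ(A)=\{tv:t>0,v\in A\}$. For $C\subset X$, $N_C(x)=\{x^*: \langle y-x,x^*\rangle\le0\ \forall y\in C\}$. For $(x,x^* ),(y,y^* )\in X\times X^*$, write $(x,x^* )\sim_p(y,y^* )$ if either $\min\{\langle x-y,y^*\rangle,\langle y-x,x^*\rangle\}<0$ or $\langle x-y,y^*\rangle=\langle y-x,x^*\rangle=0$. The pseudomonotone polar is $T^\rho=\{(x,x^* ): (x,x^* )\sim_p(y,y^* )\ \forall (y,y^* )\in T\}$, and $T^\rho_D$ denotes its restriction to $\mathrm{dom}(T)$. $T$ is pseudomonotone if for all $(x,x^* ),(y,y^* )\in T$, $\langle y-x,x^*\rangle\ge0$ implies $\langle y-x,y^*\rangle\ge0$. Two operators $T,S$ are equivalent if $\mathrm{dom}(T)=\mathrm{dom}(S)$,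 $Z_T=Z_S$ and $\operatorname{cone}(T(x))=\operatorname{cone}(S(x))$ for all $x\in\mathrm{dom}(T)\setminus Z_T$. $T$ is $D$-maximal pseudomonotone if $T$ is pseudomonotone and there is a pseudomonotone operator $S$ equivalent to $T$ which has no proper pseudomonotone extension with the same domain. For $x\in Z_T$, $L(T,x)=\{y\in X:\exists y^*\in T(y),\ \langle x-y,y^*\rangle\ge0\}$, and $\widehat T(x)=N_{L(T,x)}(x)$ if $x\in Z_T$, $\widehat T(x)=\operatorname{cone}_\circ(T(x))$ if $x\in\mathrm{dom}(T)\setminus Z_T$, $\widehat T(x)=\emptyset$ if $x\notin\mathrm{dom}(T)$. *)

theory Defs
  imports "HOL-Analysis.Analysis"
begin

text \<open>X is a real Banach space ('a::banach), its dual is the space of bounded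
 linear functionals 'a \<Rightarrow>L real; pairing <x,x*> = blinfun_apply x* x.
 A multivalued operator is identified with its graph.\<close>

type_synonym ('a) mop = "('a \<times> ('a \<Rightarrow>\<^sub>L real)) set"

definition opval :: "('a::real_normed_vector) mop \<Rightarrow> 'a \<Rightarrow> ('a \<Rightarrow>\<^sub>L real) set" where
  "opval T x = {v. (x, v) \<in> T}"

definition opdom :: "('a::real_normed_vector) mop \<Rightarrow> 'a set" where
  "opdom T = {x. opval T x \<noteq> {}}"

definition zeros :: "('a::real_normed_vector) mop \<Rightarrow> 'a set" where
  "zeros T = {x. 0 \<in> opval T x}"

definition pcone :: "('a::real_normed_vector \<Rightarrow>\<^sub>L real) set \<Rightarrow> ('a \<Rightarrow>\<^sub>L real) set" where
  "pcone A = {t *\<^sub>R v | t v. t \<ge> 0 \<and> v \<in> A}"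

definition pcone_open :: "('a::real_normed_vector \<Rightarrow>\<^sub>L real) set \<Rightarrow> ('a \<Rightarrow>\<^sub>L real) set" where
  "pcone_open A = {t *\<^sub>R v | t v. t > 0 \<and> v \<in> A}"

definition normal_cone :: "('a::real_normed_vector) set \<Rightarrow> 'a \<Rightarrow> ('a \<Rightarrow>\<^sub>L real) set" where
  "normal_cone C x = {v. \<forall>y\<in>C. blinfun_apply v (y - x) \<le> 0}"

definition sim_p :: "'a::real_normed_vector \<times> ('a \<Rightarrow>\<^sub>L real) \<Rightarrow> 'a \<times> ('a \<Rightarrow>\<^sub>L real) \<Rightarrow> bool" where
  "sim_p p q = (let (x, xs) = p; (y, ys) = q in
      min (blinfun_apply ys (x - y)) (blinfun_apply xs (y - x)) < 0 \<or>
      (blinfun_apply ys (x - y) = 0 \<and> blinfun_apply xs (y - x) = 0))"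

definition pm_polar :: "('a::real_normed_vector) mop \<Rightarrow> 'a mop" where
  "pm_polar T = {p. \<forall>q\<in>T. sim_p p q}"

definition pm_polar_D :: "('a::real_normed_vector) mop \<Rightarrow> 'a mop" where
  "pm_polar_D T = {p \<in> pm_polar T. fst p \<in> opdom T}"

definition pseudomonotone :: "('a::real_normed_vector) mop \<Rightarrow> bool" where
  "pseudomonotone T = (\<forall>x xs y ys. (x, xs) \<in> T \<longrightarrow> (y, ys) \<in> T \<longrightarrow>
      blinfun_apply xs (y - x) \<ge> 0 \<longrightarrow> blinfun_apply ys (y - x) \<ge> 0)"

definition op_equivalent :: "('a::real_normed_vector) mop \<Rightarrow> 'a mop \<Rightarrow> bool" where
  "op_equivalent T S = (opdom T = opdom S \<and> zeros T = zeros S \<and>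
      (\<forall>x \<in> opdom T - zeros T. pcone (opval T x) = pcone (opval S x)))"

definition D_maximal_pm :: "('a::real_normed_vector) mop \<Rightarrow> bool" where
  "D_maximal_pm T = (pseudomonotone T \<and>
     (\<exists>S. pseudomonotone S \<and> op_equivalent T S \<and>
        (\<forall>S'. pseudomonotone S' \<and> S \<subseteq> S' \<and> opdom S' = opdom S \<longrightarrow> S' = S)))"

definition Lset :: "('a::real_normed_vector) mop \<Rightarrow> 'a \<Rightarrow> 'a set" where
  "Lset T x = {y. \<exists>ys \<in> opval T y. blinfun_apply ys (x - y) \<ge> 0}"

definition That :: "('a::real_normed_vector) mop \<Rightarrow> 'a mop" where
  "That T = {(x, v). (x \<in> zeros T \<and> v \<in> normal_cone (Lset T x) x) \<or>
                     (x \<in> opdom T - zeros T \<and> v \<in> pcone_open (opval T x))}"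

end

theory Submission
  imports Defs
begin

declare blinfun.scaleR_left [simp]

lemma neg_app: "blinfun_apply (v::'a::real_normed_vector \<Rightarrow>\<^sub>L real) (x - y) = - blinfun_apply v (y - x)"
  by (metis blinfun.minus_right minus_diff_eq)

lemma sim_p_iff: "sim_p (x,xs) (y,ys) \<longleftrightarrow>
   ((blinfun_apply xs (y-x) \<ge> 0 \<longrightarrow> blinfun_apply ys (x-y) \<le> 0) \<and>
    (blinfun_apply ys (x-y) \<ge> 0 \<longrightarrow> blinfun_apply xs (y-x) \<le> 0))"
  unfolding sim_p_def Let_def by (auto simp: min_def)

lemma pm_sim:
  assumes "pseudomonotone S" "(x,xs) \<in> S" "(y,ys) \<in> S"
  shows "sim_p (x,xs) (y,ys)"
proof -
  have 1: "blinfun_apply xs (y - x) \<ge> 0 \<Longrightarrow> blinfun_apply ys (y - x) \<ge> 0"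
    using assms unfolding pseudomonotone_def by blast
  have 2: "blinfun_apply ys (x - y) \<ge> 0 \<Longrightarrow> blinfun_apply xs (x - y) \<ge> 0"
    using assms unfolding pseudomonotone_def by blast
  show ?thesis unfolding sim_p_iff using 1 2 neg_app[of ys x y] neg_app[of xs x y] by auto
qed

lemma insert_pm:
  assumes "pseudomonotone S" "\<forall>q\<in>S. sim_p (x,xs) q"
  shows "pseudomonotone (insert (x,xs) S)"
  unfolding pseudomonotone_def
proof (intro allI impI)
  fix a as b bs
  assume A: "(a,as) \<in> insert (x,xs) S" "(b,bs) \<in> insert (x,xs) S" "0 \<le> blinfun_apply as (b - a)"
  show "0 \<le> blinfun_apply bs (b - a)"
  proof (cases "(a,as) = (x,xs)")
    case True
    show ?thesis
    proof (cases "(b,bs) = (x,xs)")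
      case True then show ?thesis using \<open>(a,as) = (x,xs)\<close> by simp
    next
      case False
      then have "(b,bs) \<in> S" using A by auto
      then have "sim_p (x,xs) (b,bs)" using assms by auto
      then show ?thesis using A True unfolding sim_p_iff using neg_app[of bs x b] by auto
    qed
  next
    case F: False
    then have aS: "(a,as) \<in> S" using A by auto
    show ?thesis
    proof (cases "(b,bs) = (x,xs)")
      case True
      have "sim_p (x,xs) (a,as)" using assms aS by auto
      then show ?thesis using A True unfolding sim_p_iff using neg_app[of as x a] neg_app[of xs x a] by auto
    next
      case False
      then have "(b,bs) \<in> S" using A by auto
      then show ?thesis using aS A assms(1) unfolding pseudomonotone_def by blast
    qed
  qed
qed

lemma pcone_openI: "t > 0 \<Longrightarrow> v \<in> A \<Longrightarrow> t *\<^sub>R v \<in> pcone_open A"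
  unfolding pcone_open_def by blast

lemma pcone_open_1: "v \<in> A \<Longrightarrow> v \<in> pcone_open A"
  using pcone_openI[of 1 v A] by simp

lemma pcone_1: "v \<in> A \<Longrightarrow> v \<in> pcone A"
  unfolding pcone_def by (rule CollectI, rule exI[of _ 1], rule exI[of _ v]) simp

lemma zeros_dom: "zeros T \<subseteq> opdom T"
  unfolding zeros_def opdom_def by auto

lemma That_val_z: "x \<in> zeros T \<Longrightarrow> opval (That T) x = normal_cone (Lset T x) x"
  unfolding opval_def That_def by auto

lemma That_val_nz: "x \<in> opdom T \<Longrightarrow> x \<notin> zeros T \<Longrightarrow> opval (That T) x = pcone_open (opval T x)"
  unfolding opval_def That_def by auto

lemma That_val_nd: "x \<notin> opdom T \<Longrightarrow> opval (That T) x = {}"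
  using zeros_dom unfolding opval_def That_def by auto

lemma That_mem: "(x,v) \<in> That T \<longleftrightarrow> v \<in> opval (That T) x"
  unfolding opval_def by simp

lemma That_dom: "opdom (That T) = opdom T"
proof -
  have "opval (That T) x \<noteq> {} \<longleftrightarrow> x \<in> opdom T" for x
  proof (cases "x \<in> opdom T")
    case True
    show ?thesis
    proof (cases "x \<in> zeros T")
      case z: True
      then have "0 \<in> opval (That T) x" using That_val_z[of x T] unfolding normal_cone_def by simp
      then show ?thesis using True by blast
    next
      case False
      obtain v where "v \<in> opval T x" using True unfolding opdom_def by auto
      then have "v \<in> pcone_open (opval T x)" by (rule pcone_open_1)
      then show ?thesis using That_val_nz[OF True False] True by auto
    qed
  next
    case False
    then show ?thesis using That_val_nd[OF False] by simp
  qed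
  then show ?thesis unfolding opdom_def[of "That T"] by auto
qed

lemma That_zeros: "zeros (That T) = zeros T"
proof -
  have "0 \<in> opval (That T) x \<longleftrightarrow> x \<in> zeros T" for x
  proof (cases "x \<in> zeros T")
    case True
    then have "0 \<in> opval (That T) x" using That_val_z[of x T] unfolding normal_cone_def by simp
    then show ?thesis using True by blast
  next
    case nz: False
    show ?thesis
    proof (cases "x \<in> opdom T")
      case False
      then show ?thesis using That_val_nd[OF False] nz by simp
    next
      case x: True
      have "0 \<notin> opval (That T) x"
      proof
        assume "0 \<in> opval (That T) x"
        then have "0 \<in> pcone_open (opval T x)" using x nz That_val_nz[of x T] by auto
        then obtain t v where tv: "t > 0" "v \<in> opval T x" "0 = t *\<^sub>R v"
          unfolding pcone_open_def by blast
        then have "v = 0" by (metis scaleR_eq_0_iff less_irrefl)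
        then show False using tv nz unfolding zeros_def by auto
      qed
      then show ?thesis using nz by simp
    qed
  qed
  then show ?thesis unfolding zeros_def[of "That T"] by auto
qed

lemma pcone_pcone_open: "pcone (pcone_open A) = pcone A"
proof
  show "pcone (pcone_open A) \<subseteq> pcone A"
  proof
    fix w assume "w \<in> pcone (pcone_open A)"
    then obtain t u where tu: "t \<ge> 0" "u \<in> pcone_open A" "w = t *\<^sub>R u" unfolding pcone_def by auto
    then obtain s v where sv: "s > 0" "v \<in> A" "u = s *\<^sub>R v" unfolding pcone_open_def by auto
    have "w = (t * s) *\<^sub>R v" using tu sv by simp
    moreover have "t * s \<ge> 0" using tu sv by simp
    ultimately show "w \<in> pcone A" using sv unfolding pcone_def by blast
  qed
  show "pcone A \<subseteq> pcone (pcone_open A)"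
  proof
    fix w assume "w \<in> pcone A"
    then obtain t v where "t \<ge> 0" "v \<in> A" "w = t *\<^sub>R v" unfolding pcone_def by auto
    moreover have "v \<in> pcone_open A" using \<open>v \<in> A\<close> by (rule pcone_open_1)
    ultimately show "w \<in> pcone (pcone_open A)" unfolding pcone_def by blast
  qed
qed

lemma That_equiv: "op_equivalent T (That T)"
  unfolding op_equivalent_def
proof (intro conjI ballI)
  fix x assume "x \<in> opdom T - zeros T"
  then show "pcone (opval T x) = pcone (opval (That T) x)"
    using That_val_nz[of x T] pcone_pcone_open by auto
qed (simp_all add: That_dom That_zeros)

lemma T_sub_That:
  assumes "pseudomonotone T"
  shows "T \<subseteq> That T"
proof
  fix p assume p: "p \<in> T"
  obtain x v where pe: "p = (x,v)" by (cases p)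
  have xd: "x \<in> opdom T" using p pe unfolding opdom_def opval_def by auto
  show "p \<in> That T"
  proof (cases "x \<in> zeros T")
    case True
    have "v \<in> normal_cone (Lset T x) x"
      unfolding normal_cone_def mem_Collect_eq
    proof
      fix z assume "z \<in> Lset T x"
      then obtain zs where "(z,zs) \<in> T" "blinfun_apply zs (x - z) \<ge> 0"
        unfolding Lset_def opval_def by auto
      then have "blinfun_apply v (x - z) \<ge> 0" using assms p pe unfolding pseudomonotone_def by blast
      then show "blinfun_apply v (z - x) \<le> 0" using neg_app[of v x z] by auto
    qed
    then show ?thesis using True pe That_val_z That_mem by metis
  next
    case False
    have "v \<in> opval T x" using p pe unfolding opval_def by simp
    then have "v \<in> pcone_open (opval T x)" by (rule pcone_open_1)
    then have "v \<in> opval (That T) x" using That_val_nz[OF xd False] by simp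
    then show ?thesis unfolding pe by (rule That_mem[THEN iffD2])
  qed
qed

lemma That_pm:
  assumes pm: "pseudomonotone T"
  shows "pseudomonotone (That T)"
  unfolding pseudomonotone_def
proof (intro allI impI)
  fix x xs y ys
  assume A: "(x,xs) \<in> That T" "(y,ys) \<in> That T" "0 \<le> blinfun_apply xs (y - x)"
  have "x \<in> opdom (That T)" "y \<in> opdom (That T)" using A(1,2) unfolding opdom_def opval_def by auto
  then have xd: "x \<in> opdom T" and yd: "y \<in> opdom T" using That_dom[of T] by auto
  show "0 \<le> blinfun_apply ys (y - x)"
  proof (cases "y \<in> zeros T")
    case True
    have "x \<in> Lset T y"
    proof (cases "x \<in> zeros T")
      case True then show ?thesis unfolding Lset_def zeros_def by (auto intro!: bexI[of _ 0])
    next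
      case False
      have "xs \<in> opval (That T) x" using That_mem[THEN iffD1, OF A(1)] .
      then have "xs \<in> pcone_open (opval T x)" using That_val_nz[OF xd False] by simp
      then obtain t u where tu: "t > 0" "u \<in> opval T x" "xs = t *\<^sub>R u"
        unfolding pcone_open_def by blast
      then have "blinfun_apply u (y - x) \<ge> 0" using A(3)
        by (simp add: zero_le_mult_iff)
      then show ?thesis using tu unfolding Lset_def by auto
    qed
    moreover have "ys \<in> normal_cone (Lset T y) y" using A(2) True That_val_z That_mem by metis
    ultimately have "blinfun_apply ys (x - y) \<le> 0" unfolding normal_cone_def by auto
    then show ?thesis using neg_app[of ys x y] by auto
  next
    case yz: False
    have "ys \<in> opval (That T) y" using That_mem[THEN iffD1, OF A(2)] .
    then have "ys \<in> pcone_open (opval T y)" using That_val_nz[OF yd yz] by simp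
    then obtain s w where sw: "s > 0" "w \<in> opval T y" "ys = s *\<^sub>R w"
      unfolding pcone_open_def by blast
    have yw: "(y,w) \<in> T" using sw unfolding opval_def by simp
    have "0 \<le> blinfun_apply w (y - x)"
    proof (cases "x \<in> zeros T")
      case True
      then have "(x,0) \<in> T" unfolding zeros_def opval_def by auto
      from pm[unfolded pseudomonotone_def, rule_format, OF this yw] show ?thesis by simp
    next
      case False
      have "xs \<in> opval (That T) x" using That_mem[THEN iffD1, OF A(1)] .
      then have "xs \<in> pcone_open (opval T x)" using That_val_nz[OF xd False] by simp
      then obtain t u where tu: "t > 0" "u \<in> opval T x" "xs = t *\<^sub>R u"
        unfolding pcone_open_def by blast
      then have u0: "blinfun_apply u (y - x) \<ge> 0" using A(3)
        by (simp add: zero_le_mult_iff)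
      have "(x,u) \<in> T" using tu unfolding opval_def by simp
      from pm[unfolded pseudomonotone_def, rule_format, OF this yw u0] show ?thesis .
    qed
    then show ?thesis using sw by simp
  qed
qed

lemma That_sub_polar:
  assumes pm: "pseudomonotone T"
  shows "That T \<subseteq> pm_polar_D T"
proof
  fix p assume p: "p \<in> That T"
  obtain x v where pe: "p = (x,v)" by (cases p)
  have "x \<in> opdom (That T)" using p pe unfolding opdom_def opval_def by auto
  then have "x \<in> opdom T" using That_dom[of T] by auto
  moreover have "\<forall>q\<in>T. sim_p p q"
  proof
    fix q assume "q \<in> T"
    then have "q \<in> That T" using T_sub_That pm by auto
    then show "sim_p p q" using pm_sim[OF That_pm[OF pm]] p pe by (cases q) auto
  qed
  ultimately show "p \<in> pm_polar_D T" using pe unfolding pm_polar_D_def pm_polar_def by auto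
qed

lemma sim_p_scale:
  assumes "sim_p (x,xs) (y,w)" "s > 0"
  shows "sim_p (x,xs) (y, s *\<^sub>R w)"
  using assms unfolding sim_p_iff by (auto simp: zero_le_mult_iff mult_le_0_iff)

lemma half_sub: "(y::'a::real_vector) - (1/2) *\<^sub>R y = (1/2) *\<^sub>R y"
proof -
  have h: "y = (1/2) *\<^sub>R y + (1/2) *\<^sub>R y" by (simp flip: scaleR_add_left)
  show ?thesis by (subst (1) h) simp
qed

lemma mid_facts:
  fixes x y z :: "'a::real_normed_vector" and f :: "'a \<Rightarrow>\<^sub>L real"
  assumes z: "z = (1/2) *\<^sub>R y + (1/2) *\<^sub>R x"
  shows "blinfun_apply f (z - y) = (1/2) * blinfun_apply f (x - y)"
    "blinfun_apply f (y - z) = -(1/2) * blinfun_apply f (x - y)"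
    "blinfun_apply f (x - z) = (1/2) * blinfun_apply f (x - y)"
    "blinfun_apply f (z - x) = -(1/2) * blinfun_apply f (x - y)"
proof -
  have "z - y = (1/2) *\<^sub>R (x - y)" "y - z = (-(1/2)) *\<^sub>R (x - y)"
  "x - z = (1/2) *\<^sub>R (x - y)" "z - x = (-(1/2)) *\<^sub>R (x - y)"
  using half_sub[of x] half_sub[of y] unfolding z by (simp_all add: algebra_simps)
  then show "blinfun_apply f (z - y) = (1/2) * blinfun_apply f (x - y)"
    "blinfun_apply f (y - z) = -(1/2) * blinfun_apply f (x - y)"
    "blinfun_apply f (x - z) = (1/2) * blinfun_apply f (x - y)"
    "blinfun_apply f (z - x) = -(1/2) * blinfun_apply f (x - y)"
    by (simp_all add: blinfun.scaleR_right blinfun.minus_right)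
qed

lemma part1:
  assumes pm: "pseudomonotone T" and H: "That T = pm_polar_D T"
  shows "D_maximal_pm T"
  unfolding D_maximal_pm_def
proof (intro conjI exI[of _ "That T"])
  show "pseudomonotone T" by fact
  show "pseudomonotone (That T)" using That_pm[OF pm] .
  show "op_equivalent T (That T)" by (rule That_equiv)
  show "\<forall>S'. pseudomonotone S' \<and> That T \<subseteq> S' \<and> opdom S' = opdom (That T) \<longrightarrow> S' = That T"
  proof (intro allI impI)
    fix S' assume A: "pseudomonotone S' \<and> That T \<subseteq> S' \<and> opdom S' = opdom (That T)"
    have "S' \<subseteq> That T"
    proof
      fix p assume p: "p \<in> S'"
      obtain x v where pe: "p = (x,v)" by (cases p)
      have "x \<in> opdom S'" using p pe unfolding opdom_def opval_def by auto
      then have xd: "x \<in> opdom T" using A That_dom[of T] by auto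
      have "\<forall>q\<in>T. sim_p p q"
      proof
        fix q assume "q \<in> T"
        then have "q \<in> S'" using T_sub_That[OF pm] A by auto
        then show "sim_p p q" using pm_sim[of S'] A p pe by (cases q) auto
      qed
      then have "p \<in> pm_polar_D T" using xd pe unfolding pm_polar_D_def pm_polar_def by auto
      then show "p \<in> That T" using H by simp
    qed
    then show "S' = That T" using A by auto
  qed
qed

lemma part2:
  assumes pm: "pseudomonotone T" and cv: "convex (opdom T)" and DM: "D_maximal_pm T"
  shows "That T = pm_polar_D T"
proof
  show "That T \<subseteq> pm_polar_D T" using That_sub_polar[OF pm] .
  obtain S where pS: "pseudomonotone S" and eq: "op_equivalent T S"
    and mx: "\<forall>S'. pseudomonotone S' \<and> S \<subseteq> S' \<and> opdom S' = opdom S \<longrightarrow> S' = S"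
    using DM unfolding D_maximal_pm_def by blast
  have domS: "opdom S = opdom T" and zS: "zeros S = zeros T"
    and cS: "\<And>x. x \<in> opdom T - zeros T \<Longrightarrow> pcone (opval T x) = pcone (opval S x)"
    using eq unfolding op_equivalent_def by auto
  show "pm_polar_D T \<subseteq> That T"
  proof
    fix p assume p: "p \<in> pm_polar_D T"
    obtain x xs where pe: "p = (x,xs)" by (cases p)
    have xd: "x \<in> opdom T" and sim: "\<And>y ys. (y,ys) \<in> T \<Longrightarrow> sim_p (x,xs) (y,ys)"
      using p pe unfolding pm_polar_D_def pm_polar_def by auto
    show "p \<in> That T"
    proof (cases "x \<in> zeros T")
      case True
      have "xs \<in> normal_cone (Lset T x) x"
        unfolding normal_cone_def mem_Collect_eq
      proof
        fix z assume "z \<in> Lset T x"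
        then obtain zs where zs: "(z,zs) \<in> T" "blinfun_apply zs (x - z) \<ge> 0"
          unfolding Lset_def opval_def by auto
        then show "blinfun_apply xs (z - x) \<le> 0" using sim[OF zs(1)] unfolding sim_p_iff by auto
      qed
      then show ?thesis using True pe That_val_z That_mem by metis
    next
      case xnz: False
      have C: "\<forall>q\<in>S. sim_p (x,xs) q"
      proof
        fix q assume q: "q \<in> S"
        obtain y ys where qe: "q = (y,ys)" by (cases q)
        have yS: "(y,ys) \<in> S" using q qe by simp
        have yd: "y \<in> opdom T" using yS domS unfolding opdom_def opval_def by auto
        show "sim_p (x,xs) q"
        proof (cases "y \<in> zeros T")
          case ynz: False
          have "ys \<in> pcone (opval S y)" using yS unfolding opval_def by (simp add: pcone_1)
          then have "ys \<in> pcone (opval T y)" using cS[of y] yd ynz by auto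
          then obtain s w where sw: "s \<ge> 0" "w \<in> opval T y" "ys = s *\<^sub>R w" unfolding pcone_def by auto
          have "s \<noteq> 0"
          proof
            assume "s = 0"
            then have "0 \<in> opval S y" using sw yS unfolding opval_def by auto
            then show False using ynz zS unfolding zeros_def by auto
          qed
          then have "s > 0" using sw by auto
          moreover have "sim_p (x,xs) (y,w)" using sim sw unfolding opval_def by auto
          ultimately show ?thesis using sim_p_scale qe sw by metis
        next
          case yz: True
          then have "(y,0) \<in> T" unfolding zeros_def opval_def by auto
          from sim[OF this] have b: "blinfun_apply xs (y - x) \<le> 0" unfolding sim_p_iff by simp
          have "blinfun_apply xs (y - x) = 0 \<Longrightarrow> blinfun_apply ys (x - y) \<le> 0"
          proof (rule ccontr)
            assume b0: "blinfun_apply xs (y - x) = 0" and "\<not> blinfun_apply ys (x - y) \<le> 0"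
            then have a: "blinfun_apply ys (x - y) > 0" by simp
            define z where "z = (1/2) *\<^sub>R y + (1/2) *\<^sub>R x"
            have zd: "z \<in> opdom T" using cv yd xd unfolding convex_def z_def by auto
            have ysyz: "blinfun_apply ys (y - z) < 0" using mid_facts(2)[OF z_def, of ys] a  by simp
            show False
            proof (cases "z \<in> zeros T")
              case True
              then have "(z,0) \<in> S" using zS unfolding zeros_def opval_def by auto
              from pS[unfolded pseudomonotone_def, rule_format, OF this yS]
              have "blinfun_apply ys (y - z) \<ge> 0" by simp
              then show False using ysyz by simp
            next
              case znz: False
              obtain w where wS: "(z,w) \<in> S" using zd domS unfolding opdom_def opval_def by auto
              have "w \<in> pcone (opval S z)" using wS unfolding opval_def by (simp add: pcone_1)
              then have "w \<in> pcone (opval T z)" using cS[of z] zd znz by auto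
              then obtain s v where sv: "s \<ge> 0" "v \<in> opval T z" "w = s *\<^sub>R v" unfolding pcone_def by auto
              have "s \<noteq> 0"
              proof
                assume "s = 0"
                then have "0 \<in> opval S z" using sv wS unfolding opval_def by auto
                then show False using znz zS unfolding zeros_def by auto
              qed
              then have s0: "s > 0" using sv by auto
              have "sim_p (x,xs) (z,v)" using sim sv unfolding opval_def by auto
              moreover have "blinfun_apply xs (z - x) = 0" using mid_facts(4)[OF z_def, of xs] b0
                neg_app[of xs x y]  by simp
              ultimately have "blinfun_apply v (x - z) \<le> 0" unfolding sim_p_iff by auto
              then have "blinfun_apply w (x - z) \<le> 0" using sv s0 by (simp add: mult_le_0_iff)
              then have w1: "blinfun_apply w (x - y) \<le> 0" using mid_facts(3)[OF z_def, of w]  by simp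
              have "blinfun_apply ys (z - y) \<ge> 0" using mid_facts(1)[OF z_def, of ys] a  by simp
              then have "blinfun_apply w (z - y) \<ge> 0" using pS yS wS unfolding pseudomonotone_def by blast
              then have "blinfun_apply w (x - y) \<ge> 0" using mid_facts(1)[OF z_def, of w]  by simp
              then have "blinfun_apply w (y - z) \<ge> 0" using w1 mid_facts(2)[OF z_def, of w]  by simp
              then have "blinfun_apply ys (y - z) \<ge> 0" using pS yS wS unfolding pseudomonotone_def by blast
              then show False using ysyz by simp
            qed
          qed
          then show ?thesis unfolding qe sim_p_iff using b by auto
        qed
      qed
      have "pseudomonotone (insert (x,xs) S)" using insert_pm[OF pS C] .
      moreover have "opdom (insert (x,xs) S) = opdom S" using xd domS unfolding opdom_def opval_def by auto
      ultimately have "insert (x,xs) S = S" using mx by blast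
      then have xS: "(x,xs) \<in> S" by blast
      have "xs \<in> pcone (opval S x)" using xS unfolding opval_def by (simp add: pcone_1)
      then have "xs \<in> pcone (opval T x)" using cS[of x] xd xnz by auto
      then obtain t v where tv: "t \<ge> 0" "v \<in> opval T x" "xs = t *\<^sub>R v" unfolding pcone_def by auto
      have "t \<noteq> 0"
      proof
        assume "t = 0"
        then have "0 \<in> opval S x" using tv xS unfolding opval_def by auto
        then show False using xnz zS unfolding zeros_def by auto
      qed
      then have "xs \<in> pcone_open (opval T x)" using tv pcone_openI[of t v] by simp
      then show ?thesis using That_val_nz[OF xd xnz] That_mem pe by metis
    qed
  qed
qed

theorem mainTheorem15:
  fixes T :: "('a::banach \<times> ('a \<Rightarrow>\<^sub>L real)) set"
  assumes "pseudomonotone T"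
  shows "(That T = pm_polar_D T \<longrightarrow> D_maximal_pm T) \<and>
         (convex (opdom T) \<longrightarrow> D_maximal_pm T \<longrightarrow> That T = pm_polar_D T)"
  using part1[OF assms] part2[OF assms] by blast

end
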